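(* Let $n\ge1$ and let $f$ be an automorphism of the additive group $\mathbb{Z}^n$. Then the set of lengths of the cycles of $f$ is finite.
   Context: For a bijection $f$ of a set, a cycle is a finite sequence $a_1,\dots,a_m$ of distinct elements with $f(a_j)=a_{j+1}$ for $j<m$ and $f(a_m)=a_1$; its length is $m$. *)

theory Defs
  imports "HOL-Analysis.Analysis"
begin

definition is_cycle :: "('a \<Rightarrow> 'a) \<Rightarrow> 'a list \<Rightarrow> bool" where
  "is_cycle f xs \<longleftrightarrow> xs \<noteq> [] \<and> distinct xs \<and>
     (\<forall>j. Suc j < length xs \<longrightarrow> f (xs ! j) = xs ! Suc j) \<and>
     f (last xs) = hd xs"

definition cycle_lengths :: "('a \<Rightarrow> 'a) \<Rightarrow> nat set" where
  "cycle_lengths f = {length xs | xs. is_cycle f xs}"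

end

theory Submission
  imports Defs
begin

definition rv :: "int ^ 'n \<Rightarrow> real ^ 'n" where
  "rv x = (\<chi> i. real_of_int (x $ i))"

definition ext :: "(int ^ 'n \<Rightarrow> int ^ 'n) \<Rightarrow> real ^ 'n \<Rightarrow> real ^ 'n" where
  "ext g y = (\<Sum>i\<in>UNIV. (y $ i) *\<^sub>R rv (g (axis i 1)))"

lemma rv_inj: "rv x = rv y \<Longrightarrow> x = y"
  unfolding rv_def by (simp add: vec_eq_iff)

lemma ext_linear: "linear (ext g)"
  unfolding linear_iff ext_def
  by (auto simp: sum.distrib scaleR_add_left scaleR_sum_right)

lemma add_zero: fixes g :: "int ^ 'n \<Rightarrow> int ^ 'n" assumes "\<And>x y. g (x + y) = g x + g y" shows "g 0 = 0"
  using assms[of 0 0] by simp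

lemma add_nat_smult:
  fixes g f :: "int ^ 'n \<Rightarrow> int ^ 'n"
  assumes "\<And>x y. g (x + y) = g x + g y"
  shows "g (int n *s v) = int n *s g v"
proof (induction n)
  case 0 then show ?case using add_zero[OF assms] by simp
next
  case (Suc n)
  have "int (Suc n) *s v = v + int n *s v" by (simp add: vector_sadd_rdistrib)
  then show ?case using Suc assms by (simp add: vector_sadd_rdistrib)
qed

lemma add_int_smult:
  fixes g f :: "int ^ 'n \<Rightarrow> int ^ 'n"
  assumes "\<And>x y. g (x + y) = g x + g y"
  shows "g (k *s v) = k *s g v"
proof (cases "k \<ge> 0")
  case True
  then obtain n where "k = int n" by (metis nonneg_eq_int)
  then show ?thesis using add_nat_smult[OF assms] by simp
next
  case False
  then have "- k \<ge> 0" by simp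
  then obtain n where "- k = int n" by (metis nonneg_eq_int)
  then have k: "k = - int n" by simp
  have neg: "g (- w) = - g w" for w
  proof -
    have "g w + g (- w) = 0" using assms[of w "- w"] add_zero[OF assms] by simp
    then show ?thesis by (metis minus_unique)
  qed
  have "k *s v = - (int n *s v)" using k by (simp add: vector_smult_lneg)
  then show ?thesis using neg add_nat_smult[OF assms] k by (simp add: vector_smult_lneg)
qed

lemma add_sum:
  fixes g f :: "int ^ 'n \<Rightarrow> int ^ 'n"
  assumes "\<And>x y. g (x + y) = g x + g y"
  shows "g (sum h A) = (\<Sum>a\<in>A. g (h a))"
  by (induction A rule: infinite_finite_induct) (auto simp: add_zero[OF assms] assms)

lemma rv_sum: "rv (sum h A) = (\<Sum>a\<in>A. rv (h a))"
  by (induction A rule: infinite_finite_induct) (auto simp: rv_def vec_eq_iff)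

lemma rv_smult: "rv (k *s v) = real_of_int k *\<^sub>R rv v"
  by (simp add: rv_def vec_eq_iff)

lemma ext_rv:
  fixes g f :: "int ^ 'n \<Rightarrow> int ^ 'n"
  assumes "\<And>x y. g (x + y) = g x + g y"
  shows "ext g (rv x) = rv (g x)"
proof -
  have "g x = g (\<Sum>i\<in>UNIV. (x$i) *s axis i 1)" by (simp add: basis_expansion)
  also have "\<dots> = (\<Sum>i\<in>UNIV. (x$i) *s g (axis i 1))"
    by (subst add_sum[OF assms]) (simp add: add_int_smult[OF assms])
  finally show ?thesis
    by (simp add: ext_def rv_sum rv_smult) (simp add: rv_def)
qed

lemma funpow_additive:
  fixes g f :: "int ^ 'n \<Rightarrow> int ^ 'n"
  assumes "\<And>x y. f (x + y) = f x + f y"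
  shows "(f ^^ n) (x + y) = (f ^^ n) x + (f ^^ n) y"
  by (induction n) (auto simp: assms)

lemma funpow_period:
  assumes "(f ^^ p) x = x"
  shows "(f ^^ (p * k)) x = x"
proof (induction k)
  case 0 then show ?case by simp
next
  case (Suc k)
  have "(f ^^ (p * Suc k)) x = (f ^^ p) ((f ^^ (p * k)) x)"
    by (simp add: funpow_add)
  then show ?case using Suc assms by simp
qed

lemma cycle_iter:
  assumes "is_cycle f xs" "j < length xs"
  shows "(f ^^ j) (hd xs) = xs ! j"
  using assms(2)
proof (induction j)
  case 0 then show ?case using assms(1) by (simp add: is_cycle_def hd_conv_nth)
next
  case (Suc j)
  then show ?case using assms(1) unfolding is_cycle_def by auto
qed

lemma cycle_full:
  assumes "is_cycle f xs"
  shows "(f ^^ length xs) (hd xs) = hd xs"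
proof -
  have ne: "xs \<noteq> []" using assms by (simp add: is_cycle_def)
  then obtain m where m: "length xs = Suc m" by (cases xs) auto
  have "(f ^^ length xs) (hd xs) = f ((f ^^ m) (hd xs))" using m by simp
  also have "\<dots> = f (xs ! m)" using cycle_iter[OF assms, of m] m by simp
  also have "xs ! m = last xs" using ne m by (simp add: last_conv_nth)
  finally show ?thesis using assms by (simp add: is_cycle_def)
qed

theorem proposition3p2:
  fixes f :: "int ^ 'n \<Rightarrow> int ^ 'n"
  assumes "bij f"
    and "\<And>x y. f (x + y) = f x + f y"
  shows "finite (cycle_lengths f)"
proof -
  let ?P = "{x. \<exists>p>0. (f ^^ p) x = x}"
  obtain B where B: "B \<subseteq> rv ` ?P" "independent B" "rv ` ?P \<subseteq> span B"
    using maximal_independent_subset by blast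
  have finB: "finite B" using independent_bound B(2) by blast
  have "\<forall>b\<in>B. \<exists>p. p > 0 \<and> (\<exists>x. b = rv x \<and> (f ^^ p) x = x)" using B(1) by blast
  then obtain per where per: "\<And>b. b \<in> B \<Longrightarrow> per b > 0 \<and> (\<exists>x. b = rv x \<and> (f ^^ per b) x = x)"
    by metis
  define L where "L = prod per B"
  have Lpos: "L > 0" unfolding L_def using per finB by (simp add: prod_pos)
  have addL: "\<And>x y. (f ^^ L) (x + y) = (f ^^ L) x + (f ^^ L) y"
    by (rule funpow_additive[OF assms(2)])
  have onB: "ext (f ^^ L) b - b = 0" if b: "b \<in> B" for b
  proof -
    obtain x where x: "b = rv x" "(f ^^ per b) x = x" using per[OF b] by blast
    have "L = per b * prod per (B - {b})" unfolding L_def using finB b by (simp add: prod.remove)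
    then have "(f ^^ L) x = x" using funpow_period[OF x(2)] by simp
    then show ?thesis using x ext_rv[OF addL, of x] by simp
  qed
  have lin: "linear (\<lambda>y. ext (f ^^ L) y - y)"
    using ext_linear[of "f ^^ L"] by (intro linear_compose_sub linear_ident) auto
  have fixP: "(f ^^ L) x = x" if x: "x \<in> ?P" for x
  proof -
    have "rv x \<in> span B" using B(3) x by blast
    then have "ext (f ^^ L) (rv x) - rv x = 0"
      using linear_eq_0_on_span[OF lin] onB by blast
    then have "rv ((f ^^ L) x) = rv x" using ext_rv[OF addL, of x] by simp
    then show ?thesis by (rule rv_inj)
  qed
  have "cycle_lengths f \<subseteq> {..L}"
  proof
    fix m assume "m \<in> cycle_lengths f"
    then obtain xs where xs: "is_cycle f xs" "m = length xs" by (auto simp: cycle_lengths_def)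
    have mpos: "m > 0" using xs by (simp add: is_cycle_def)
    have "hd xs \<in> ?P" using cycle_full[OF xs(1)] xs(2) mpos by blast
    then have fx: "(f ^^ L) (hd xs) = hd xs" by (rule fixP)
    show "m \<in> {..L}"
    proof (rule ccontr)
      assume "m \<notin> {..L}"
      then have "L < m" by simp
      then have "xs ! L = xs ! 0" using cycle_iter[OF xs(1), of L] fx xs mpos
        by (simp add: hd_conv_nth is_cycle_def)
      then have "L = 0" using xs \<open>L < m\<close> mpos by (simp add: is_cycle_def nth_eq_iff_index_eq)
      then show False using Lpos by simp
    qed
  qed
  then show ?thesis by (rule finite_subset) simp
qed

end
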